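(* Let $C$ be the plane affine curve over $\mathbb{R}$ with equation $x_1^2+x_2^2=1$ and $V=C\times\mathbb{A}^1$, so $\mathbb{R}[V]=\mathbb{R}[C][y]$. Let $f\in\mathbb{R}[V]$ and $b\in\mathbb{R}[C]$ be sums of squares (in $\mathbb{R}[V]$ and $\mathbb{R}[C]$ respectively), and assume that $b$ has only real zeros on $C$ (i.e. all zeros of $b$ in $C(\mathbb{C})$ lie in $C(\mathbb{R})$). If there is $g\in\mathbb{R}[V]$ with $f=bg$, then $g$ is a sum of squares in $\mathbb{R}[V]$. *)

theory Defs
  imports Complex_Main "HOL-Computational_Algebra.Polynomial"
begin

text \<open>Polynomial rings are modelled by nested univariate polynomials:
  R[x1,x2]   = real poly poly        (inner variable x1, outer variable x2)
  R[x1,x2,y] = real poly poly poly   (outermost variable y).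
  The coordinate ring R[C] is R[x1,x2] modulo the ideal generated by
  hC = x1^2 + x2^2 - 1, and R[V] = R[C][y] is R[x1,x2,y] modulo the ideal
  generated by hC (viewed as a constant in y).  Elements of the coordinate
  rings are represented by polynomial representatives; equality in the
  coordinate ring is congruence modulo the principal ideal.\<close>

definition hC :: "real poly poly" where
  "hC = [: [:-1, 0, 1:], 0, 1 :]"

definition hV :: "real poly poly poly" where
  "hV = [: hC :]"

definition sos_mod :: "'a::comm_ring_1 \<Rightarrow> 'a \<Rightarrow> bool" where
  "sos_mod h p \<longleftrightarrow> (\<exists>gs. h dvd (p - sum_list (map (\<lambda>g. g ^ 2) gs)))"

definition evalC :: "real poly poly \<Rightarrow> complex \<Rightarrow> complex \<Rightarrow> complex" where
  "evalC b z1 z2 = poly (map_poly (\<lambda>q. poly (map_poly complex_of_real q) z1) b) z2"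

end

theory Submission
  imports Defs "HOL-Computational_Algebra.Fundamental_Theorem_Algebra"
begin

definition X1 :: "real poly poly" where "X1 = [:[:0,1:]:]"
definition X2 :: "real poly poly" where "X2 = [:0,1:]"
definition K :: "real \<Rightarrow> real poly poly" where "K r = [:[:r:]:]"
lemma hC_eq: "hC = X1^2 + X2^2 - 1"
  by (simp add: hC_def X1_def X2_def power2_eq_square one_pCons)
lemma hV_eq: "hV = [:X1:]^2 + [:X2:]^2 - 1"
  by (simp add: hV_def hC_eq power2_eq_square one_pCons)
lemma K_mult: "K a * K b = K (a*b)" by (simp add: K_def)
lemma K_add: "K a + K b = K (a+b)" by (simp add: K_def)
lemma K_diff: "K a - K b = K (a-b)" by (simp add: K_def)
lemma K_1: "K 1 = 1" by (simp add: K_def one_pCons)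
lemma K_0: "K 0 = 0" by (simp add: K_def)
lemma K_pow: "K a ^ n = K (a ^ n)" by (induction n) (simp_all add: K_1 K_mult)

lemma key_id:
  fixes xx yy aa bb A B :: "'a::comm_ring_1"
  shows "2*((yy-bb)*A + (xx-aa)*B)^2 - (1 - aa*xx - bb*yy)*(((yy-bb)*A + (xx-aa)*B)^2+((xx+aa)*A - (yy+bb)*B)^2)
     = (xx^2+yy^2-1)*(A^2 - B^2 + 2*bb^2*B^2 - 2*bb^2*A^2 - 4*aa*bb*A*B + yy*bb*B^2 + yy*bb*A^2 + xx*aa*B^2 + xx*aa*A^2)
     + (aa^2+bb^2-1)*(B^2 - A^2 + yy*bb*B^2 + yy*bb*A^2 + xx*aa*B^2 + xx*aa*A^2 - 4*xx*yy*A*B - 2*xx^2*B^2 + 2*xx^2*A^2)"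
  by (simp add: algebra_simps power2_eq_square)

lemma map_poly_hom_add:
  assumes "h 0 = 0" "\<And>x y. h (x + y) = h x + h y"
  shows "map_poly h (p + q) = map_poly h p + map_poly h q"
  by (intro poly_eqI) (simp add: coeff_map_poly assms)

lemma map_poly_hom_diff:
  assumes "h 0 = 0" "\<And>x y. h (x - y) = h x - h y"
  shows "map_poly h (p - q) = map_poly h p - map_poly h q"
  by (intro poly_eqI) (simp add: coeff_map_poly assms)

lemma map_poly_hom_mult:
  fixes h :: "'a::comm_semiring_1 \<Rightarrow> 'b::comm_semiring_1"
  assumes "h 0 = 0" "\<And>x y. h (x + y) = h x + h y" "\<And>x y. h (x * y) = h x * h y"
  shows "map_poly h (p * q) = map_poly h p * map_poly h q"
proof (intro poly_eqI)
  fix n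
  have hs: "h (sum f A) = sum (h o f) A" if "finite A" for f :: "nat \<Rightarrow> 'a" and A
    using that by (induction A rule: finite_induct) (simp_all add: assms)
  show "coeff (map_poly h (p * q)) n = coeff (map_poly h p * map_poly h q) n"
    by (simp add: coeff_map_poly assms coeff_mult hs)
qed

definition e1 :: "complex \<Rightarrow> real poly \<Rightarrow> complex" where
  "e1 z a = poly (map_poly complex_of_real a) z"

lemma e1_0[simp]: "e1 z 0 = 0" by (simp add: e1_def)
lemma e1_add: "e1 z (a + b) = e1 z a + e1 z b"
  by (simp add: e1_def map_poly_hom_add)
lemma e1_diff: "e1 z (a - b) = e1 z a - e1 z b"
  by (simp add: e1_def map_poly_hom_diff)
lemma e1_mult: "e1 z (a * b) = e1 z a * e1 z b"
  by (simp add: e1_def map_poly_hom_mult)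
lemma e1_1: "e1 z 1 = 1" by (simp add: e1_def)

lemma evalC_alt: "evalC b z1 z2 = poly (map_poly (e1 z1) b) z2"
  by (simp add: evalC_def e1_def[abs_def])
lemma evalC_add: "evalC (a + b) z1 z2 = evalC a z1 z2 + evalC b z1 z2"
  by (simp add: evalC_alt map_poly_hom_add e1_add)
lemma evalC_diff: "evalC (a - b) z1 z2 = evalC a z1 z2 - evalC b z1 z2"
  by (simp add: evalC_alt map_poly_hom_diff e1_diff)
lemma evalC_mult: "evalC (a * b) z1 z2 = evalC a z1 z2 * evalC b z1 z2"
  by (simp add: evalC_alt map_poly_hom_mult e1_add e1_mult)
lemma evalC_hC: "evalC hC z1 z2 = z1^2 + z2^2 - 1"
  by (simp add: evalC_alt hC_def e1_def map_poly_pCons power2_eq_square)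

lemma e1_of_real: "e1 (of_real a) p = of_real (poly p a)"
  by (induction p) (simp_all add: e1_def map_poly_pCons)

definition ev2 :: "real poly poly \<Rightarrow> real \<Rightarrow> real \<Rightarrow> real" where
  "ev2 c a1 a2 = poly (poly c [:a2:]) a1"

lemma evalC_of_real: "evalC b (of_real a1) (of_real a2) = of_real (ev2 b a1 a2)"
  by (induction b) (simp_all add: evalC_alt ev2_def map_poly_pCons e1_of_real)

lemma ev2_simps[simp]: "ev2 (a + b) a1 a2 = ev2 a a1 a2 + ev2 b a1 a2"
  "ev2 (a - b) a1 a2 = ev2 a a1 a2 - ev2 b a1 a2"
  "ev2 (a * b) a1 a2 = ev2 a a1 a2 * ev2 b a1 a2"
  "ev2 (a ^ n) a1 a2 = ev2 a a1 a2 ^ n"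
  "ev2 0 a1 a2 = 0" "ev2 1 a1 a2 = 1"
  "ev2 X1 a1 a2 = a1" "ev2 X2 a1 a2 = a2" "ev2 (K r) a1 a2 = r"
  by (simp_all add: ev2_def X1_def X2_def K_def)

lemma decomp2:
  assumes "ev2 c a1 a2 = 0"
  shows "\<exists>A B. c = (X2 - K a2)*A + (X1 - K a1)*B"
proof -
  define r where "r = poly c [:a2:]"
  have "poly (c - [:r:]) [:a2:] = 0" by (simp add: r_def)
  then have "[:-[:a2:],1:] dvd (c - [:r:])" by (metis poly_eq_0_iff_dvd)
  then obtain A where A: "c - [:r:] = [:-[:a2:],1:] * A" by (auto elim: dvdE)
  have "poly r a1 = 0" using assms by (simp add: r_def ev2_def)
  then have "[:-a1,1:] dvd r" by (metis poly_eq_0_iff_dvd)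
  then obtain s where s: "r = [:-a1,1:] * s" by (auto elim: dvdE)
  have e1: "[:-[:a2:],1:] = X2 - K a2" by (simp add: X2_def K_def)
  have e2: "[:r:] = (X1 - K a1) * [:s:]" by (simp add: X1_def K_def s)
  have "c = (X2 - K a2)*A + (X1 - K a1)*[:s:]"
    using A e1 e2 by (metis diff_eq_eq add.commute)
  then show ?thesis by blast
qed

lemma decomp3:
  assumes "\<forall>i. ev2 (coeff F i) a1 a2 = 0"
  shows "\<exists>A B. F = [:X2 - K a2:]*A + [:X1 - K a1:]*B"
  using assms
proof (induction F)
  case 0
  show ?case by (rule exI[of _ 0], rule exI[of _ 0], simp)
next
  case (pCons c F)
  have "ev2 c a1 a2 = 0" using pCons.prems by (metis coeff_pCons_0)
  then obtain a b where ab: "c = (X2 - K a2)*a + (X1 - K a1)*b" using decomp2 by blast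
  have "\<forall>i. ev2 (coeff F i) a1 a2 = 0" using pCons.prems by (metis coeff_pCons_Suc)
  then obtain A B where AB: "F = [:X2 - K a2:]*A + [:X1 - K a1:]*B" using pCons.IH by blast
  have "pCons c F = [:X2 - K a2:]*pCons a A + [:X1 - K a1:]*pCons b B"
    by (simp add: ab AB)
  then show ?case by blast
qed

definition ev3 :: "real poly poly poly \<Rightarrow> real \<Rightarrow> real \<Rightarrow> real \<Rightarrow> real" where
  "ev3 F a1 a2 y = ev2 (poly F [:[:y:]:]) a1 a2"

lemma ev3_simps[simp]: "ev3 (a + b) a1 a2 y = ev3 a a1 a2 y + ev3 b a1 a2 y"
  "ev3 (a - b) a1 a2 y = ev3 a a1 a2 y - ev3 b a1 a2 y"
  "ev3 (a * b) a1 a2 y = ev3 a a1 a2 y * ev3 b a1 a2 y"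
  "ev3 (a ^ n) a1 a2 y = ev3 a a1 a2 y ^ n"
  "ev3 [:c:] a1 a2 y = ev2 c a1 a2"
  by (simp_all add: ev3_def)

lemma ev3_sum_list: "ev3 (sum_list xs) a1 a2 y = sum_list (map (\<lambda>x. ev3 x a1 a2 y) xs)"
  by (induction xs) (simp_all add: ev3_def ev2_def)

lemma ev2_sum_list: "ev2 (sum_list xs) a1 a2 = sum_list (map (\<lambda>x. ev2 x a1 a2) xs)"
  by (induction xs) (simp_all add: ev2_def)

lemma ev3_map: "ev3 F a1 a2 y = poly (map_poly (\<lambda>c. ev2 c a1 a2) F) y"
  by (induction F) (simp_all add: ev3_def map_poly_pCons ev2_def)

lemma ev3_vanish_coeff:
  assumes "\<forall>y. ev3 F a1 a2 y = 0"
  shows "\<forall>i. ev2 (coeff F i) a1 a2 = 0"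
proof
  fix i
  have "map_poly (\<lambda>c. ev2 c a1 a2) F = 0" using assms by (simp add: ev3_map poly_all_0_iff_0)
  then have "coeff (map_poly (\<lambda>c. ev2 c a1 a2) F) i = 0" by simp
  then show "ev2 (coeff F i) a1 a2 = 0" by (simp add: coeff_map_poly)
qed

lemma sum_sq_zero:
  fixes xs :: "real list"
  assumes "sum_list (map (\<lambda>x. x^2) xs) = 0"
  shows "\<forall>x\<in>set xs. x = 0"
  using assms
proof (induction xs)
  case Nil then show ?case by simp
next
  case (Cons a xs)
  have s0: "sum_list (map (\<lambda>x. x^2) xs) \<ge> 0" by (induction xs) auto
  have a0: "a^2 \<ge> 0" by simp
  have e: "a^2 + sum_list (map (\<lambda>x. x^2) xs) = 0" using Cons.prems by simp
  have "a^2 = 0" using s0 a0 e by linarith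
  moreover have "sum_list (map (\<lambda>x. x^2) xs) = 0" using s0 a0 e by linarith
  ultimately show ?case using Cons.IH by simp
qed

definition L :: "real \<Rightarrow> real \<Rightarrow> real poly poly" where
  "L a1 a2 = 1 - K a1 * X1 - K a2 * X2"

lemma cpoly_lemmas:
  fixes a b c d :: "'a::comm_ring_1"
  shows "[:1 - a*b - c*d:] = 1 - [:a:]*[:b:] - [:c:]*[:d:]"
    "[:a^2 + b^2 - 1:] = [:a:]^2 + [:b:]^2 - 1"
    "[:a:]^n = [:a^n:]"
    "[:a - b:] = [:a:] - [:b:]"
    "[:a:] + [:b:] = [:a + b:]"
  by (simp_all add: one_pCons power2_eq_square) (induction n, simp_all add: one_pCons)

lemma single2:
  assumes a: "a1^2 + a2^2 = 1" and f: "ev2 f a1 a2 = 0"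
  shows "\<exists>h1 h2. hC dvd f^2 - L a1 a2 * (h1^2 + h2^2)"
proof -
  obtain A B where AB: "f = (X2 - K a2)*A + (X1 - K a1)*B" using decomp2[OF f] by blast
  define v where "v = (X1 + K a1)*A - (X2 + K a2)*B"
  have ki: "\<exists>Q1 Q2. 2*((X2 - K a2)*A + (X1 - K a1)*B)^2 - (1 - K a1*X1 - K a2*X2)*(((X2 - K a2)*A + (X1 - K a1)*B)^2 + ((X1+K a1)*A - (X2+K a2)*B)^2) = (X1^2+X2^2-1)*Q1 + (K a1^2+K a2^2-1)*Q2"
    by (rule exI, rule exI, rule key_id)
  have k0: "K a1^2 + K a2^2 - 1 = 0"
  proof -
    have "K a1^2 + K a2^2 - 1 = K (a1^2 + a2^2 - 1)" by (simp add: K_pow K_add K_diff flip: K_1)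
    then show ?thesis using a by (simp add: K_0)
  qed
  obtain Q where Q: "2*f^2 - L a1 a2*(f^2+v^2) = hC * Q"
    using ki unfolding k0 hC_eq[symmetric] AB[symmetric] v_def[symmetric] L_def[symmetric] by auto
  define c where "c = K (sqrt (1/2))"
  have c2: "c^2 = K (1/2)" unfolding c_def K_pow by simp
  have half: "K (1/2) * (X + X) = X" for X
  proof -
    have "K (1/2) * (X + X) = (K (1/2) + K (1/2)) * X" by (simp only: distrib_left distrib_right)
    also have "K (1/2) + K (1/2) = 1" unfolding K_add by (simp add: K_1)
    finally show ?thesis by simp
  qed
  have s1: "(c*f)^2 + (c*v)^2 = K (1/2)*(f^2+v^2)" unfolding power_mult_distrib c2 by (simp only: distrib_left)
  have s2: "K (1/2)*(2*f^2 - L a1 a2*(f^2+v^2)) = K (1/2)*(f^2+f^2) - L a1 a2*(K (1/2)*(f^2+v^2))"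
    by (simp only: mult_2 right_diff_distrib mult.left_commute)
  have "f^2 - L a1 a2 * ((c*f)^2 + (c*v)^2) = K (1/2) * (2*f^2 - L a1 a2*(f^2+v^2))"
    unfolding s1 s2 half ..
  also have "\<dots> = hC * (K (1/2) * Q)" using Q by simp
  finally have "f^2 - L a1 a2 * ((c*f)^2 + (c*v)^2) = hC * (K (1/2) * Q)" .
  then show ?thesis by (intro exI[of _ "c*f"] exI[of _ "c*v"]) (metis dvd_triv_left)
qed

lemma D2:
  assumes a: "a1^2 + a2^2 = 1" and fs: "\<forall>f\<in>set fs. ev2 f a1 a2 = 0"
  shows "\<exists>hs. hC dvd sum_list (map (\<lambda>g. g^2) fs) - L a1 a2 * sum_list (map (\<lambda>g. g^2) hs)"
  using fs
proof (induction fs)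
  case Nil
  show ?case by (rule exI[of _ "[]"], simp)
next
  case (Cons f fs)
  have "ev2 f a1 a2 = 0" using Cons.prems by simp
  then obtain h1 h2 where h: "hC dvd f^2 - L a1 a2 * (h1^2 + h2^2)" using single2[OF a] by blast
  obtain hs where hs: "hC dvd sum_list (map (\<lambda>g. g^2) fs) - L a1 a2 * sum_list (map (\<lambda>g. g^2) hs)"
    using Cons by auto
  have "sum_list (map (\<lambda>g. g^2) (f#fs)) - L a1 a2 * sum_list (map (\<lambda>g. g^2) (h1#h2#hs))
     = (f^2 - L a1 a2 * (h1^2 + h2^2)) + (sum_list (map (\<lambda>g. g^2) fs) - L a1 a2 * sum_list (map (\<lambda>g. g^2) hs))"
    by (simp add: algebra_simps)
  then have "hC dvd sum_list (map (\<lambda>g. g^2) (f#fs)) - L a1 a2 * sum_list (map (\<lambda>g. g^2) (h1#h2#hs))"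
    using h hs by (metis dvd_add)
  then show ?case by blast
qed

lemma single3:
  assumes a: "a1^2 + a2^2 = 1" and f: "\<forall>y. ev3 f a1 a2 y = 0"
  shows "\<exists>h1 h2. hV dvd f^2 - [:L a1 a2:] * (h1^2 + h2^2)"
proof -
  obtain A B where AB: "f = [:X2 - K a2:]*A + [:X1 - K a1:]*B"
    using decomp3[OF ev3_vanish_coeff[OF f]] by blast
  define v where "v = ([:X1:] + [:K a1:])*A - ([:X2:] + [:K a2:])*B"
  have ki: "\<exists>Q1 Q2. 2*(([:X2:] - [:K a2:])*A + ([:X1:] - [:K a1:])*B)^2 - (1 - [:K a1:]*[:X1:] - [:K a2:]*[:X2:])*((([:X2:] - [:K a2:])*A + ([:X1:] - [:K a1:])*B)^2 + (([:X1:]+[:K a1:])*A - ([:X2:]+[:K a2:])*B)^2) = ([:X1:]^2+[:X2:]^2-1)*Q1 + ([:K a1:]^2+[:K a2:]^2-1)*Q2"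
    by (rule exI, rule exI, rule key_id)
  have k0: "[:K a1:]^2 + [:K a2:]^2 - 1 = (0::real poly poly poly)"
  proof -
    have "K a1^2 + K a2^2 - 1 = K (a1^2 + a2^2 - 1)" by (simp add: K_pow K_add K_diff flip: K_1)
    then have "K a1^2 + K a2^2 - 1 = 0" using a by (simp add: K_0)
    moreover have "[:K a1:]^2 + [:K a2:]^2 - 1 = [:K a1^2 + K a2^2 - 1:]" by (rule cpoly_lemmas(2)[symmetric])
    ultimately show ?thesis by simp
  qed
  have e1: "[:X2 - K a2:] = [:X2:] - [:K a2:]" "[:X1 - K a1:] = [:X1:] - [:K a1:]"
    by (simp_all only: cpoly_lemmas)
  have e2: "[:L a1 a2:] = 1 - [:K a1:]*[:X1:] - [:K a2:]*[:X2:]"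
    unfolding L_def by (rule cpoly_lemmas(1))
  obtain Q where Q: "2*f^2 - [:L a1 a2:]*(f^2+v^2) = hV * Q"
    using ki unfolding k0 hV_eq[symmetric] e1[symmetric] e2[symmetric] AB[symmetric] v_def[symmetric] by auto
  define c where "c = [:K (sqrt (1/2)):]"
  have c2: "c^2 = [:K (1/2):]" unfolding c_def cpoly_lemmas K_pow by simp
  have half: "[:K (1/2):] * (X + X) = X" for X
  proof -
    have "[:K (1/2):] * (X + X) = ([:K (1/2):] + [:K (1/2):]) * X" by (simp only: distrib_left distrib_right)
    also have "[:K (1/2):] + [:K (1/2):] = 1" unfolding cpoly_lemmas K_add by (simp add: K_1 one_pCons)
    finally show ?thesis by simp
  qed
  have s1: "(c*f)^2 + (c*v)^2 = [:K (1/2):]*(f^2+v^2)" by (simp only: power_mult_distrib c2 distrib_left)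
  have s2: "[:K (1/2):]*(2*f^2 - [:L a1 a2:]*(f^2+v^2)) = [:K (1/2):]*(f^2+f^2) - [:L a1 a2:]*([:K (1/2):]*(f^2+v^2))"
    by (simp only: mult_2 right_diff_distrib mult.left_commute)
  have "f^2 - [:L a1 a2:] * ((c*f)^2 + (c*v)^2) = [:K (1/2):] * (2*f^2 - [:L a1 a2:]*(f^2+v^2))"
    unfolding s1 s2 half ..
  also have "\<dots> = hV * ([:K (1/2):] * Q)" using Q by simp
  finally have "f^2 - [:L a1 a2:] * ((c*f)^2 + (c*v)^2) = hV * ([:K (1/2):] * Q)" .
  then show ?thesis by (intro exI[of _ "c*f"] exI[of _ "c*v"]) (metis dvd_triv_left)
qed

lemma D3:
  assumes a: "a1^2 + a2^2 = 1" and fs: "\<forall>f\<in>set fs. \<forall>y. ev3 f a1 a2 y = 0"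
  shows "\<exists>hs. hV dvd sum_list (map (\<lambda>g. g^2) fs) - [:L a1 a2:] * sum_list (map (\<lambda>g. g^2) hs)"
  using fs
proof (induction fs)
  case Nil
  show ?case by (rule exI[of _ "[]"], simp)
next
  case (Cons f fs)
  have "\<forall>y. ev3 f a1 a2 y = 0" using Cons.prems by simp
  then obtain h1 h2 where h: "hV dvd f^2 - [:L a1 a2:] * (h1^2 + h2^2)" using single3[OF a] by blast
  obtain hs where hs: "hV dvd sum_list (map (\<lambda>g. g^2) fs) - [:L a1 a2:] * sum_list (map (\<lambda>g. g^2) hs)"
    using Cons by auto
  have "sum_list (map (\<lambda>g. g^2) (f#fs)) - [:L a1 a2:] * sum_list (map (\<lambda>g. g^2) (h1#h2#hs))
     = (f^2 - [:L a1 a2:] * (h1^2 + h2^2)) + (sum_list (map (\<lambda>g. g^2) fs) - [:L a1 a2:] * sum_list (map (\<lambda>g. g^2) hs))"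
    by (simp add: algebra_simps)
  then have "hV dvd sum_list (map (\<lambda>g. g^2) (f#fs)) - [:L a1 a2:] * sum_list (map (\<lambda>g. g^2) (h1#h2#hs))"
    using h hs by (metis dvd_add)
  then show ?case by blast
qed

lemma X1sq: "X1^2 - 1 = [:[:-1,0,1:]:]"
  by (simp add: X1_def power2_eq_square one_pCons)

lemma pCons_X2: "pCons c b = [:c:] + X2*b"
  by (simp add: X2_def)

lemma red_exists: "\<exists>p q. hC dvd b - [:p,q:]"
proof (induction b)
  case 0
  show ?case by (rule exI[of _ 0], rule exI[of _ 0], simp)
next
  case (pCons c b)
  then obtain p q where "hC dvd b - [:p,q:]" by blast
  then obtain k where k: "b - [:p,q:] = hC * k" by (auto elim: dvdE)
  have e1: "[:c - q*[:-1,0,1:], p:] = [:c:] - [:q:]*(X1^2-1) + X2*[:p:]"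
    unfolding X1sq pCons_X2[of _ "[:p:]"] by simp
  have e2: "[:p,q:] = [:p:] + X2*[:q:]" by (rule pCons_X2)
  have "pCons c b - [:c - q*[:-1,0,1:], p:] = X2*(b - [:p,q:]) + hC*[:q:]"
    unfolding e1 e2 pCons_X2[of c b] hC_eq by (simp add: algebra_simps power2_eq_square)
  also have "\<dots> = hC * (X2*k + [:q:])" by (simp add: k algebra_simps)
  finally show ?case by (metis dvd_triv_left)
qed

lemma degree_hC: "degree hC = 2" by (simp add: hC_def)

lemma uniq:
  assumes "hC dvd [:p,q:]"
  shows "p = 0 \<and> q = 0"
proof -
  obtain k where k: "[:p,q:] = hC * k" using assms by (auto elim: dvdE)
  show ?thesis
  proof (cases "k = 0")
    case True
    then show ?thesis using k by simp
  next
    case False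
    have "hC \<noteq> 0" using degree_hC by auto
    then have "degree (hC * k) = 2 + degree k" using False degree_hC by (simp add: degree_mult_eq)
    moreover have "degree [:p,q:] \<le> 1" by (simp add: degree_pCons_le)
    ultimately show ?thesis using k by simp
  qed
qed

lemma cancel_const:
  assumes m: "m \<noteq> 0" and d: "hC dvd [:m:] * c"
  shows "hC dvd c"
proof -
  obtain p q k where k: "c - [:p,q:] = hC * k" using red_exists by (meson dvdE)
  have "[:m:] * c = [:m*p, m*q:] + hC * ([:m:]*k)"
  proof -
    have c: "c = [:p,q:] + hC * k" using k by (simp add: algebra_simps)
    have "[:m:] * c = [:m:]*[:p,q:] + hC*([:m:]*k)" unfolding c by (simp only: distrib_left mult.left_commute)
    moreover have "[:m:]*[:p,q:] = [:m*p,m*q:]" by simp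
    ultimately show ?thesis by simp
  qed
  then have "hC dvd [:m*p, m*q:]" using d by (metis add_diff_cancel_right' dvd_diff dvd_triv_left)
  then have "m*p = 0 \<and> m*q = 0" by (rule uniq)
  then have "p = 0" "q = 0" using m by auto
  then show ?thesis using k by (metis diff_zero dvd_triv_left pCons_0_0)
qed

lemma norm_id:
  fixes x y a b :: "'a::comm_ring_1"
  shows "(1 - a*x - b*y)*(1 - a*x + b*y) = (x - a)^2 - b^2*(x^2+y^2-1) + (x^2-1)*(a^2+b^2-1)"
  by (simp add: algebra_simps power2_eq_square)

lemma K_sq_sum: "a1^2 + a2^2 = 1 \<Longrightarrow> K a1^2 + K a2^2 - 1 = 0"
proof -
  assume a: "a1^2 + a2^2 = 1"
  have "K a1^2 + K a2^2 - 1 = K (a1^2 + a2^2 - 1)" by (simp add: K_pow K_add K_diff flip: K_1)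
  then show ?thesis using a by (simp add: K_0)
qed

lemma cancel_L:
  assumes a: "a1^2 + a2^2 = 1" and d: "hC dvd L a1 a2 * c"
  shows "hC dvd c"
proof -
  define Lb where "Lb = 1 - K a1 * X1 + K a2 * X2"
  have "L a1 a2 * Lb = (X1 - K a1)^2 - (K a2)^2 * hC"
    unfolding L_def Lb_def norm_id hC_eq[symmetric] K_sq_sum[OF a] by simp
  also have "X1 - K a1 = [:[:-a1,1:]:]" by (simp add: X1_def K_def)
  also have "[:[:-a1,1:]:]^2 = [:[:-a1,1:]^2:]" by (rule cpoly_lemmas(3))
  finally have e: "L a1 a2 * Lb = [:[:-a1,1:]^2:] - (K a2)^2 * hC" .
  have "hC dvd Lb * (L a1 a2 * c)" using d by (rule dvd_mult)
  also have "Lb * (L a1 a2 * c) = (L a1 a2 * Lb) * c" by (simp only: ac_simps)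
  also have "\<dots> = [:[:-a1,1:]^2:] * c - hC * ((K a2)^2 * c)" unfolding e by (simp only: left_diff_distrib right_diff_distrib ac_simps)
  finally have "hC dvd [:[:-a1,1:]^2:] * c - hC * ((K a2)^2 * c)" .
  then have "hC dvd [:[:-a1,1:]^2:] * c" by (metis diff_add_cancel dvd_add dvd_triv_left)
  then show ?thesis by (rule cancel_const[rotated]) simp
qed

lemma hV_dvd_iff: "hV dvd P \<longleftrightarrow> (\<forall>n. hC dvd coeff P n)"
  unfolding hV_def by (rule const_poly_dvd_iff)

lemma cancel_LV:
  assumes a: "a1^2 + a2^2 = 1" and d: "hV dvd [:L a1 a2:] * Y"
  shows "hV dvd Y"
proof -
  have "\<forall>n. hC dvd L a1 a2 * coeff Y n" using d unfolding hV_dvd_iff by simp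
  then show ?thesis unfolding hV_dvd_iff using cancel_L[OF a] by blast
qed

definition NN :: "real poly \<Rightarrow> real poly \<Rightarrow> real poly" where
  "NN p q = p^2 + [:-1,0,1:] * q^2"

lemma vanish_gt1:
  fixes p :: "real poly"
  assumes "\<forall>x>1. poly p x = 0"
  shows "p = 0"
proof (rule ccontr)
  assume "p \<noteq> 0"
  then have "finite {x. poly p x = 0}" by (rule poly_roots_finite)
  moreover have "{1<..} \<subseteq> {x. poly p x = 0}" using assms by auto
  ultimately have "finite {1::real<..}" by (rule finite_subset[rotated])
  then show False using infinite_Ioi by blast
qed

lemma NN_zero:
  assumes "NN p q = 0"
  shows "p = 0 \<and> q = 0"
proof -
  have "\<forall>x>1. poly p x = 0 \<and> poly q x = 0"
  proof (intro allI impI)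
    fix x :: real assume x: "x > 1"
    have "poly (NN p q) x = 0" using assms by simp
    then have e: "(poly p x)^2 + (x^2 - 1) * (poly q x)^2 = 0"
      by (simp add: NN_def power2_eq_square algebra_simps)
    have x2: "x^2 - 1 > 0" using one_less_power[OF x, of 2] by simp
    have "(poly p x)^2 \<ge> 0" by simp
    moreover have "(x^2 - 1) * (poly q x)^2 \<ge> 0" using x2 by simp
    ultimately have "(poly p x)^2 = 0" "(x^2 - 1) * (poly q x)^2 = 0" using e by linarith+
    then show "poly p x = 0 \<and> poly q x = 0" using x2 by simp
  qed
  then show ?thesis using vanish_gt1 by blast
qed

lemma NN_deg:
  assumes q: "q \<noteq> 0"
  shows "degree (NN p q) \<ge> 2"
proof -
  define E :: "real poly" where "E = [:-1,0,1:]"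
  have dE: "degree E = 2" "lead_coeff E = 1" "E \<noteq> 0" by (simp_all add: E_def)
  define Q where "Q = E * q^2"
  have dQ: "degree Q = 2 + 2 * degree q" unfolding Q_def using q dE
    by (simp add: degree_mult_eq degree_power_eq)
  have lQ: "lead_coeff Q = (lead_coeff q)^2" unfolding Q_def lead_coeff_mult lead_coeff_power
    using dE(2) by simp
  have lq: "lead_coeff q \<noteq> 0" using q by simp
  have NN: "NN p q = p^2 + Q" by (simp add: NN_def Q_def E_def)
  show ?thesis
  proof (cases "degree (p^2) = degree Q")
    case True
    have "coeff (p^2 + Q) (degree Q) = lead_coeff (p^2) + lead_coeff Q" using True by simp
    also have "\<dots> = (lead_coeff p)^2 + (lead_coeff q)^2" by (simp add: lead_coeff_power lQ)
    also have "\<dots> > 0" using lq by (simp add: add_nonneg_pos)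
    finally have "coeff (p^2 + Q) (degree Q) \<noteq> 0" by simp
    then have "degree Q \<le> degree (p^2 + Q)" by (rule le_degree)
    then show ?thesis using dQ NN by simp
  next
    case False
    then have "degree (p^2 + Q) \<ge> degree Q"
      by (metis degree_add_eq_left degree_add_eq_right linorder_neqE_nat order.strict_implies_order order_refl)
    then show ?thesis using dQ NN by simp
  qed
qed

lemma NN_deg0:
  assumes "degree (NN p q) = 0"
  shows "q = 0 \<and> p = [:coeff p 0:]"
proof -
  have q: "q = 0" using NN_deg[of q p] assms by (cases "q = 0") auto
  then have "degree (p^2) = 0" using assms by (simp add: NN_def)
  then have "degree p = 0" by (cases "p = 0") (auto simp: degree_power_eq)
  then show ?thesis using q by (metis degree_0_id)
qed

lemma norm_mult_id:
  fixes x a b p q :: "'a::comm_ring_1"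
  shows "((1 - a*x)*p + b*(x^2-1)*q)^2 + (x^2-1)*((1 - a*x)*q - b*p)^2
     = (x - a)^2 * (p^2 + (x^2-1)*q^2) + (a^2+b^2-1)*((x^2-1)*(p^2 + (x^2-1)*q^2))"
  by (simp add: algebra_simps power2_eq_square)

lemma e1_simps: "e1 z [:c:] = of_real c" "e1 z [:-1,0,1:] = z^2 - 1"
  by (simp_all add: e1_def map_poly_pCons power2_eq_square)

lemma evalC_pq: "evalC [:p,q:] z1 z2 = e1 z1 p + z2 * e1 z1 q"
  by (simp add: evalC_alt map_poly_pCons)

lemma e1_NN: "e1 z (NN p q) = (e1 z p)^2 + (z^2 - 1) * (e1 z q)^2"
  unfolding NN_def power2_eq_square e1_add e1_mult e1_simps by simp

lemma complex_zero:
  assumes "degree (NN p q) > 0"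
  shows "\<exists>z1 z2. z1^2 + z2^2 = 1 \<and> evalC [:p,q:] z1 z2 = 0"
proof -
  have "degree (map_poly complex_of_real (NN p q)) = degree (NN p q)"
    by (rule degree_map_poly) simp
  then have "\<not> constant (poly (map_poly complex_of_real (NN p q)))"
    unfolding constant_degree using assms by simp
  then obtain z1 where z1: "poly (map_poly complex_of_real (NN p q)) z1 = 0"
    using fundamental_theorem_of_algebra by blast
  define P where "P = e1 z1 p"
  define Q where "Q = e1 z1 q"
  define z2 where "z2 = csqrt (1 - z1^2)"
  have z2sq: "z2^2 = 1 - z1^2" by (simp add: z2_def)
  have "P^2 + (z1^2 - 1) * Q^2 = 0" using z1 e1_NN[of z1 p q] by (simp add: e1_def P_def Q_def)
  then have "(P + z2*Q) * (P + (-z2)*Q) = 0"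
    by (simp add: algebra_simps power2_eq_square z2sq[unfolded power2_eq_square])
  then have "P + z2*Q = 0 \<or> P + (-z2)*Q = 0" by simp
  then show ?thesis
  proof
    assume "P + z2*Q = 0"
    then show ?thesis using z2sq by (intro exI[of _ z1] exI[of _ z2]) (simp add: evalC_pq P_def Q_def)
  next
    assume "P + (-z2)*Q = 0"
    then show ?thesis using z2sq by (intro exI[of _ z1] exI[of _ "-z2"]) (simp add: evalC_pq P_def Q_def)
  qed
qed

definition RZ :: "real poly poly \<Rightarrow> bool" where
  "RZ b \<longleftrightarrow> (\<forall>z1 z2 :: complex. z1 ^ 2 + z2 ^ 2 = 1 \<and> evalC b z1 z2 = 0 \<longrightarrow> z1 \<in> \<real> \<and> z2 \<in> \<real>)"

lemma evalC_0[simp]: "evalC 0 z1 z2 = 0" by (simp add: evalC_alt)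

lemma evalC_cong:
  assumes "hC dvd b - c" "z1^2 + z2^2 = 1"
  shows "evalC b z1 z2 = evalC c z1 z2"
proof -
  obtain k where "b - c = hC * k" using assms(1) by (auto elim: dvdE)
  then have "evalC b z1 z2 - evalC c z1 z2 = evalC hC z1 z2 * evalC k z1 z2"
    by (metis evalC_diff evalC_mult)
  then show ?thesis using assms(2) by (simp add: evalC_hC)
qed

lemma ev2_hC: "ev2 hC a1 a2 = a1^2 + a2^2 - 1" by (simp add: hC_eq)

lemma ev2_cong:
  assumes "hC dvd b - c" "a1^2 + a2^2 = 1"
  shows "ev2 b a1 a2 = ev2 c a1 a2"
proof -
  obtain k where "b - c = hC * k" using assms(1) by (auto elim: dvdE)
  then have "ev2 b a1 a2 - ev2 c a1 a2 = ev2 hC a1 a2 * ev2 k a1 a2"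
    by (metis ev2_simps(2,3))
  then show ?thesis using assms(2) by (simp add: ev2_hC)
qed

lemma ev3_cong:
  assumes "hV dvd F - G" "a1^2 + a2^2 = 1"
  shows "ev3 F a1 a2 y = ev3 G a1 a2 y"
proof -
  obtain k where "F - G = hV * k" using assms(1) by (auto elim: dvdE)
  then have "ev3 F a1 a2 y - ev3 G a1 a2 y = ev3 hV a1 a2 y * ev3 k a1 a2 y"
    by (metis ev3_simps(2,3))
  then show ?thesis using assms(2) by (simp add: ev2_hC hV_def)
qed

lemma RZ_nonzero:
  assumes "RZ b"
  shows "\<not> hC dvd b"
proof
  assume d: "hC dvd b"
  define z2 where "z2 = \<i> * complex_of_real (sqrt 3)"
  have s: "(2::complex)^2 + z2^2 = 1"
  proof -
    have "z2^2 = - ((complex_of_real (sqrt 3))^2)" by (simp add: z2_def power_mult_distrib)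
    also have "(complex_of_real (sqrt 3))^2 = complex_of_real ((sqrt 3)^2)" by (rule of_real_power[symmetric])
    finally show ?thesis by simp
  qed
  have "evalC b 2 z2 = evalC 0 2 z2" using d s by (intro evalC_cong) simp_all
  then have "evalC b 2 z2 = 0" by simp
  then have "z2 \<in> \<real>" using assms s unfolding RZ_def by blast
  moreover have "Im z2 \<noteq> 0" by (simp add: z2_def)
  ultimately show False by (simp add: complex_is_Real_iff)
qed

lemma sum_sq_nonneg: "sum_list (map (\<lambda>x. (x::real)^2) xs) \<ge> 0"
  by (induction xs) auto

lemma sum_sq_scale: fixes s :: "'a::comm_ring_1" shows "sum_list (map (\<lambda>g. g^2) (map (\<lambda>x. s*x) xs)) = s^2 * sum_list (map (\<lambda>g. g^2) xs)"
  by (induction xs) (simp_all add: power_mult_distrib distrib_left)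

lemma base_case:
  assumes bs: "sos_mod hC b" and rz: "RZ b" and fs: "sos_mod hV f"
    and fbg: "hV dvd f - [:b:]*g" and pq: "hC dvd b - [:p,q:]" and n: "degree (NN p q) = 0"
  shows "sos_mod hV g"
proof -
  define c where "c = coeff p 0"
  have q0: "q = 0" and pc: "p = [:c:]" using NN_deg0[OF n] by (auto simp: c_def)
  have bK: "hC dvd b - K c" using pq by (simp add: q0 pc K_def)
  have c0: "c \<noteq> 0"
  proof
    assume "c = 0"
    then have "hC dvd b" using bK by (simp add: K_0)
    then show False using RZ_nonzero[OF rz] by blast
  qed
  obtain bl where bl: "hC dvd b - sum_list (map (\<lambda>g. g^2) bl)" using bs unfolding sos_mod_def by blast
  have "ev2 b 1 0 = c" using ev2_cong[OF bK, of 1 0] by simp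
  moreover have "ev2 b 1 0 = sum_list (map (\<lambda>x. (ev2 x 1 0)^2) bl)"
    using ev2_cong[OF bl, of 1 0] by (simp add: ev2_sum_list o_def)
  moreover have "sum_list (map (\<lambda>x. (ev2 x 1 0)^2) bl) \<ge> 0"
    using sum_sq_nonneg[of "map (\<lambda>x. ev2 x 1 0) bl"] by (simp add: o_def)
  ultimately have cpos: "c > 0" using c0 by simp
  obtain fl where fl: "hV dvd f - sum_list (map (\<lambda>g. g^2) fl)" using fs unfolding sos_mod_def by blast
  define s where "s = [:K (sqrt (1/c)):]"
  have s2: "s^2 = [:K (1/c):]" unfolding s_def cpoly_lemmas K_pow using cpos by simp
  have inv: "[:K (1/c):] * [:K c:] = 1" using c0 by (simp add: K_mult K_1)
  define S where "S = sum_list (map (\<lambda>g. g^2) fl)"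
  have "g - sum_list (map (\<lambda>g. g^2) (map (\<lambda>x. s*x) fl)) = s^2 * ([:K c:]*g - S)"
    unfolding sum_sq_scale S_def s2 by (simp add: right_diff_distrib mult.assoc[symmetric] inv K_mult K_1 c0)
  also have "[:K c:]*g - S = (f - S) - (f - [:b:]*g + [:b - K c:]*g)"
  proof -
    have "[:b:] - [:K c:] = [:b - K c:]" by simp
    then have aux: "[:b - K c:]*g = [:b:]*g - [:K c:]*g" by (metis left_diff_distrib)
    show ?thesis unfolding aux by (simp add: algebra_simps)
  qed
  finally have e: "g - sum_list (map (\<lambda>g. g^2) (map (\<lambda>x. s*x) fl)) = s^2 * ((f - S) - (f - [:b:]*g + [:b - K c:]*g))" .
  have d1: "hV dvd f - S" using fl S_def by simp
  have d2: "hV dvd f - [:b:]*g" using fbg .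
  have "hV dvd [:b - K c:]" using bK by (simp add: hV_def)
  then have d3: "hV dvd [:b - K c:]*g" by (rule dvd_mult2)
  have "hV dvd g - sum_list (map (\<lambda>g. g^2) (map (\<lambda>x. s*x) fl))"
    unfolding e by (rule dvd_mult, rule dvd_diff[OF d1 dvd_add[OF d2 d3]])
  then show ?thesis unfolding sos_mod_def by blast
qed

lemma LPQ_id:
  fixes A B x y pp qq :: "'a::comm_ring_1"
  shows "(1 - A*x - B*y)*(pp + y*qq) - (((1 - A*x)*pp + B*(x^2-1)*qq) + y*((1 - A*x)*qq - B*pp))
    = (x^2+y^2-1)*(-(B*qq))"
  by (simp add: algebra_simps power2_eq_square)

lemma abs_id:
  fixes LL Bp B D g H f S :: "'a::comm_ring_1"
  assumes "LL*Bp = B - D"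
  shows "LL*(Bp*g - H) = (B*g - f) + (f - S) + (S - LL*H) - D*g"
proof -
  have h1: "LL*(Bp*g - H) = (LL*Bp)*g - LL*H" by (simp add: algebra_simps)
  have h2: "(LL*Bp)*g = B*g - D*g" using assms by (simp add: left_diff_distrib)
  show ?thesis unfolding h1 h2 by (simp add: algebra_simps)
qed

lemma step_case:
  assumes bs: "sos_mod hC b" and rz: "RZ b" and fs: "sos_mod hV f"
    and fbg: "hV dvd f - [:b:]*g" and pq: "hC dvd b - [:p,q:]" and n: "degree (NN p q) > 0"
  shows "\<exists>b' H p' q'. sos_mod hC b' \<and> RZ b' \<and> sos_mod hV H \<and> hV dvd H - [:b':]*g
     \<and> hC dvd b' - [:p',q':] \<and> degree (NN p' q') < degree (NN p q)"
proof -
  obtain z1 z2 where z: "z1^2 + z2^2 = 1" and ez: "evalC [:p,q:] z1 z2 = 0"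
    using complex_zero[OF n] by blast
  have "evalC b z1 z2 = 0" using evalC_cong[OF pq z] ez by simp
  then have real: "z1 \<in> \<real>" "z2 \<in> \<real>" using rz z unfolding RZ_def by blast+
  define a1 where "a1 = Re z1"
  define a2 where "a2 = Re z2"
  have z1a: "z1 = complex_of_real a1" using real(1) by (simp add: a1_def of_real_Re)
  have z2a: "z2 = complex_of_real a2" using real(2) by (simp add: a2_def of_real_Re)
  have a: "a1^2 + a2^2 = 1"
  proof -
    have "complex_of_real (a1^2 + a2^2) = 1" using z unfolding z1a z2a by simp
    then show ?thesis by (simp only: of_real_eq_1_iff)
  qed
  have eb: "ev2 b a1 a2 = 0"
    using \<open>evalC b z1 z2 = 0\<close> unfolding z1a z2a evalC_of_real by simp
  obtain bl where bl: "hC dvd b - sum_list (map (\<lambda>g. g^2) bl)" using bs unfolding sos_mod_def by blast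
  have "sum_list (map (\<lambda>x. x^2) (map (\<lambda>x. ev2 x a1 a2) bl)) = 0"
    using ev2_cong[OF bl a] eb by (simp add: ev2_sum_list o_def)
  then have "\<forall>x\<in>set bl. ev2 x a1 a2 = 0" using sum_sq_zero by fastforce
  then obtain hs where hs: "hC dvd sum_list (map (\<lambda>g. g^2) bl) - L a1 a2 * sum_list (map (\<lambda>g. g^2) hs)"
    using D2[OF a] by blast
  define b' where "b' = sum_list (map (\<lambda>g. g^2) hs)"
  have bb': "hC dvd b - L a1 a2 * b'"
    using dvd_add[OF bl hs] unfolding b'_def by simp
  have bs': "sos_mod hC b'" unfolding sos_mod_def b'_def by (rule exI[of _ hs]) simp
  have rz': "RZ b'" unfolding RZ_def
  proof (intro allI impI)
    fix w1 w2 :: complex assume w: "w1^2 + w2^2 = 1 \<and> evalC b' w1 w2 = 0"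
    have "evalC b w1 w2 = evalC (L a1 a2 * b') w1 w2" using evalC_cong[OF bb'] w by blast
    then have "evalC b w1 w2 = 0" using w by (simp add: evalC_mult)
    then show "w1 \<in> \<real> \<and> w2 \<in> \<real>" using rz w unfolding RZ_def by blast
  qed
  obtain p' q' where pq': "hC dvd b' - [:p',q':]" using red_exists by blast
  have pq'0: "\<not> (p' = 0 \<and> q' = 0)"
  proof
    assume "p' = 0 \<and> q' = 0"
    then have "hC dvd b'" using pq' by simp
    then show False using RZ_nonzero[OF rz'] by blast
  qed
  define P where "P = [:1,-a1:]*p' + [:a2:]*[:-1,0,1:]*q'"
  define Q where "Q = [:1,-a1:]*q' - [:a2:]*p'"
  have LPQ: "L a1 a2 * [:p',q':] - [:P,Q:] = hC * (- (K a2 * [:q':]))"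
  proof -
    have c1: "[:P:] = (1 - K a1 * X1)*[:p':] + K a2 * (X1^2 - 1) * [:q':]"
      unfolding X1sq P_def by (simp add: K_def X1_def one_pCons)
    have c2: "[:Q:] = (1 - K a1 * X1)*[:q':] - K a2 * [:p':]"
      unfolding Q_def by (simp add: K_def X1_def one_pCons)
    have c3: "[:P,Q:] = [:P:] + X2*[:Q:]" "[:p',q':] = [:p':] + X2*[:q':]" by (rule pCons_X2)+
    show ?thesis unfolding c3 unfolding c1 c2 L_def hC_eq by (rule LPQ_id)
  qed
  have "hC dvd [:p,q:] - [:P,Q:]"
  proof -
    have "[:p,q:] - [:P,Q:] = (b - L a1 a2 * b') - (b - [:p,q:]) + L a1 a2 * (b' - [:p',q':])
         + (L a1 a2 * [:p',q':] - [:P,Q:])" by (simp add: algebra_simps)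
    moreover have "hC dvd L a1 a2 * (b' - [:p',q':])" using pq' by (rule dvd_mult)
    moreover have "hC dvd (L a1 a2 * [:p',q':] - [:P,Q:])" unfolding LPQ by (rule dvd_triv_left)
    ultimately show ?thesis using bb' pq by (metis dvd_add dvd_diff)
  qed
  then have "hC dvd [:p - P, q - Q:]" by simp
  then have "p - P = 0 \<and> q - Q = 0" by (rule uniq)
  then have pP: "p = P" and qQ: "q = Q" by auto
  have xid: "[:1,-a1:] = 1 - [:a1:]*[:0,1:]" "[:-1,0,1:] = [:0,1:]^2 - (1::real poly)" "[:-a1,1:] = [:0,1:] - [:a1:]"
  proof -
    show "[:1,-a1:] = 1 - [:a1:]*[:0,1:]" by (simp add: one_pCons)
    have "[:0,1:]^2 - 1 = [:0::real,0,1:] - [:1:]" by (simp add: power2_eq_square one_pCons)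
    also have "\<dots> = [:-1,0,1:]" by simp
    finally show "[:-1,0,1:] = [:0,1:]^2 - (1::real poly)" by simp
    show "[:-a1,1:] = [:0,1:] - [:a1:]" by simp
  qed
  have k: "[:a1:]^2 + [:a2:]^2 - 1 = (0::real poly)"
    using a by (simp add: power2_eq_square one_pCons)
  have NNeq: "NN p q = [:-a1,1:]^2 * NN p' q'"
    unfolding pP qQ P_def Q_def NN_def xid norm_mult_id k by simp
  have NN'0: "NN p' q' \<noteq> 0" using NN_zero pq'0 by blast
  have "degree (NN p q) = 2 + degree (NN p' q')"
    unfolding NNeq using NN'0 by (simp add: degree_mult_eq degree_power_eq)
  then have deg: "degree (NN p' q') < degree (NN p q)" by simp
  obtain fl where fl: "hV dvd f - sum_list (map (\<lambda>g. g^2) fl)" using fs unfolding sos_mod_def by blast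
  have "\<forall>x\<in>set fl. \<forall>y. ev3 x a1 a2 y = 0"
  proof (intro ballI allI)
    fix x y assume x: "x \<in> set fl"
    have "ev3 f a1 a2 y = ev3 ([:b:]*g) a1 a2 y" using ev3_cong[OF fbg a] .
    also have "ev3 ([:b:]*g) a1 a2 y = 0" by (simp only: ev3_simps eb mult_zero_left)
    finally have "ev3 f a1 a2 y = 0" .
    then have "sum_list (map (\<lambda>x. x^2) (map (\<lambda>x. ev3 x a1 a2 y) fl)) = 0"
      using ev3_cong[OF fl a, of y] by (simp add: ev3_sum_list o_def)
    then show "ev3 x a1 a2 y = 0" using sum_sq_zero x by fastforce
  qed
  then obtain hs3 where hs3: "hV dvd sum_list (map (\<lambda>g. g^2) fl) - [:L a1 a2:] * sum_list (map (\<lambda>g. g^2) hs3)"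
    using D3[OF a] by blast
  define H where "H = sum_list (map (\<lambda>g. g^2) hs3)"
  have "hV dvd [:L a1 a2:] * ([:b':]*g - H)"
  proof -
    have "[:L a1 a2:] * [:b':] = [:b:] - [:b - L a1 a2 * b':]" by simp
    then have "[:L a1 a2:] * ([:b':]*g - H) = ([:b:]*g - f) + (f - sum_list (map (\<lambda>g. g^2) fl))
       + (sum_list (map (\<lambda>g. g^2) fl) - [:L a1 a2:] * H) - [:b - L a1 a2 * b':] * g"
      by (rule abs_id)
    moreover have "hV dvd [:b - L a1 a2 * b':] * g"
    proof -
      have "hV dvd [:b - L a1 a2 * b':]" using bb' by (simp add: hV_def)
      then show ?thesis by (rule dvd_mult2)
    qed
    moreover have "hV dvd [:b:]*g - f" using fbg by (metis dvd_minus_iff minus_diff_eq)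
    ultimately show ?thesis using fl hs3 unfolding H_def by (metis dvd_add dvd_diff)
  qed
  then have "hV dvd [:b':]*g - H" by (rule cancel_LV[OF a])
  then have Hd: "hV dvd H - [:b':]*g" by (metis dvd_minus_iff minus_diff_eq)
  have Hs: "sos_mod hV H" unfolding sos_mod_def H_def by (rule exI[of _ hs3]) simp
  show ?thesis using bs' rz' Hs Hd pq' deg by blast
qed

lemma main_ind:
  "\<forall>b f g p q. sos_mod hC b \<and> RZ b \<and> sos_mod hV f \<and> hV dvd f - [:b:]*g
     \<and> hC dvd b - [:p,q:] \<and> degree (NN p q) = n \<longrightarrow> sos_mod hV g"
proof (induction n rule: less_induct)
  case (less n)
  show ?case
  proof (intro allI impI)
    fix b f g p q
    assume A: "sos_mod hC b \<and> RZ b \<and> sos_mod hV f \<and> hV dvd f - [:b:]*g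
     \<and> hC dvd b - [:p,q:] \<and> degree (NN p q) = n"
    show "sos_mod hV g"
    proof (cases "n = 0")
      case True
      then show ?thesis using base_case A by blast
    next
      case False
      then have "degree (NN p q) > 0" using A by simp
      then obtain b' H p' q' where S: "sos_mod hC b'" "RZ b'" "sos_mod hV H" "hV dvd H - [:b':]*g"
        "hC dvd b' - [:p',q':]" "degree (NN p' q') < degree (NN p q)"
        using step_case A by blast
      have "degree (NN p' q') < n" using S(6) A by simp
      then show ?thesis using less.IH S by blast
    qed
  qed
qed

theorem lemma2p2:
  fixes f g :: "real poly poly poly" and b :: "real poly poly"
  assumes f_sos: "sos_mod hV f"
    and b_sos: "sos_mod hC b"
    and b_real_zeros: "\<forall>z1 z2 :: complex. z1 ^ 2 + z2 ^ 2 = 1 \<and> evalC b z1 z2 = 0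
                          \<longrightarrow> z1 \<in> \<real> \<and> z2 \<in> \<real>"
    and fbg: "hV dvd (f - [:b:] * g)"
  shows "sos_mod hV g"
proof -
  obtain p q where pq: "hC dvd b - [:p,q:]" using red_exists by blast
  have "RZ b" unfolding RZ_def using b_real_zeros .
  then show ?thesis using main_ind[of "degree (NN p q)"] f_sos b_sos fbg pq by blast
qed

end
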